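(* Let $d\ge 2$, $m=2^d$, let $r\ge 2$, $t=\lceil \log_2 r\rceil$, let $c\in\{0,\dots,r-1\}^m$ and $\ell\in\{0,\dots,r-1\}$. Let $\mathrm{Ind}\in\{0,1\}^m$ be given by $\mathrm{Ind}(i)=1$ if $c(i)=\ell$ and $\mathrm{Ind}(i)=0$ otherwise. For each prime $p\in \mathrm{Primes}_{m,d}$ let $b_p=\mathrm{SPiRiT}_p(\mathrm{Ind})\in\{0,\dots,p-1\}^d$, and let $i_p=1+\sum_{h=1}^d b_p(h)\,2^{h-1}$ (with the entries of $b_p$ read as integers in $\{0,\dots,p-1\}$). Let $C=\{i_p: p\in\mathrm{Primes}_{m,d}\}\cap[m]$, and let $i^\dagger=\min\{i\in C: c(i)=\ell\}$ (with $i^\dagger=0$ if this set is empty). Then $$i^\dagger=\min\{i\in[m]: c(i)=\ell\}$$ (where the minimum of the empty set is $0$). Moreover: $|\mathrm{Primes}_{m,d}|=O(\log^2 m/\log\log m)$; there is an absolute constant $K$ such that every $p\in\mathrm{Primes}_{m,d}$ satisfies $p\le K\log_2^2 m$; and, writing each entry of $c$ and $\ell$ by its $t$-bit binary representation, each coordinate of $b_p$ equals, as a function of these $(m+1)t$ bits (viewed as elements of $\mathbb Z_p$), a polynomial over $\mathbb Z_p$ of degree at most $2t(p-1)^2=O(\log^4 m\,\log r)$.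
   Context: Logarithms are base 2 unless stated. $[m]=\{1,\dots,m\}$. Let $m=2^d$. Consider the complete binary tree with nodes indexed $1,\dots,2m-1$: node $1$ is the root, node $k\in[m-1]$ has left child $2k$ and right child $2k+1$; nodes $m,\dots,2m-1$ are leaves, and leaf number $i\in[m]$ is node $m+i-1$. For $i\in[m]$ let $\mathrm{Anc}(i)=\{\lfloor (m+i-1)/2^h\rfloor: h=0,\dots,d\}$ (the ancestors of leaf $i$, including the leaf itself and the root), and $\mathrm{Lop}(i)=\{k-1: k\in \mathrm{Anc}(i),\ k\text{ odd},\ k\ge 3\}$ (the left siblings of those nodes of $\mathrm{Anc}(i)$ that are right children). Tree matrix $T\in\{0,1\}^{(2m-1)\times m}$: $T(k,i)=1$ iff $k\in\mathrm{Anc}(i)$. Roots matrix $R\in\{0,1\}^{m\times(2m-1)}$: for $j\in[m-1]$, $R(j,k)=1$ iff $k\in\mathrm{Lop}(j+1)$; row $m$ of $R$ is the indicator vector of $\{1\}$. Pairwise matrix $P\in\{-1,0,1\}^{m\times m}$: $(Pu)(1)=u(1)$ and $(Pu)(k)=u(k)-u(k-1)$ for $k\ge 2$. Sketch matrix $S\in\{0,1\}^{d\times m}$: $S(h,k)$ is the $h$-th bit (the coefficient of $2^{h-1}$) of $k-1$. For a prime $p$ and an integer vector $y$, $i_p(y)$ is the vector with entries $y(k)^{p-1}\bmod p$, and $\mathrm{SPiRiT}_p(x)=\big(SP\cdot i_p\big((R\cdot i_p(Tx\bmod p))\bmod p\big)\big)\bmod p$. For integers $m\ge 4$ and $s\ge1$,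 with $b=\lceil\log_2 m\rceil$, $\mathrm{Primes}_{m,s}$ is the set of the $N=1+\lfloor \lceil s\rceil\log_b m\rfloor$ smallest primes that are larger than $b$. *)

theory Defs
  imports Complex_Main "HOL-Computational_Algebra.Primes" "HOL-Library.Landau_Symbols"
begin

(* Vectors are functions nat => int, indexed from 1; m = 2^d. *)

definition Anc :: "nat \<Rightarrow> nat \<Rightarrow> nat set" where
  "Anc d i = {(2^d + i - 1) div 2^h | h. h \<le> d}"

definition Lop :: "nat \<Rightarrow> nat \<Rightarrow> nat set" where
  "Lop d i = {k - 1 | k. k \<in> Anc d i \<and> odd k \<and> k \<ge> 3}"

definition mat_vec :: "(nat \<Rightarrow> nat \<Rightarrow> int) \<Rightarrow> nat \<Rightarrow> (nat \<Rightarrow> int) \<Rightarrow> (nat \<Rightarrow> int)" where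
  "mat_vec A n x = (\<lambda>k. \<Sum>i=1..n. A k i * x i)"

definition tree_mat :: "nat \<Rightarrow> nat \<Rightarrow> nat \<Rightarrow> int" where
  "tree_mat d k i = (if k \<in> Anc d i then 1 else 0)"

definition roots_mat :: "nat \<Rightarrow> nat \<Rightarrow> nat \<Rightarrow> int" where
  "roots_mat d j k =
     (if 1 \<le> j \<and> j \<le> 2^d - 1 then (if k \<in> Lop d (j+1) then 1 else 0)
      else if j = 2^d then (if k = 1 then 1 else 0) else 0)"

definition pair_mat :: "nat \<Rightarrow> nat \<Rightarrow> int" where
  "pair_mat k i = (if i = k then 1 else if k \<ge> 2 \<and> i = k - 1 then -1 else 0)"

definition sketch_mat :: "nat \<Rightarrow> nat \<Rightarrow> int" where
  "sketch_mat h k = int (((k - 1) div 2^(h - 1)) mod 2)"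

definition ip :: "nat \<Rightarrow> (nat \<Rightarrow> int) \<Rightarrow> (nat \<Rightarrow> int)" where
  "ip p y = (\<lambda>k. (y k)^(p - 1) mod int p)"

definition vmod :: "(nat \<Rightarrow> int) \<Rightarrow> nat \<Rightarrow> (nat \<Rightarrow> int)" where
  "vmod y p = (\<lambda>k. y k mod int p)"

definition SPiRiT :: "nat \<Rightarrow> nat \<Rightarrow> (nat \<Rightarrow> int) \<Rightarrow> (nat \<Rightarrow> int)" where
  "SPiRiT d p x =
     vmod (mat_vec sketch_mat (2^d) (mat_vec pair_mat (2^d)
       (ip p (vmod (mat_vec (roots_mat d) (2 * 2^d - 1)
          (ip p (vmod (mat_vec (tree_mat d) (2^d) x) p))) p)))) p"

(* Primes_{m,s}: the N smallest primes larger than b = ceil(log2 m),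
   N = 1 + floor(ceil(s) * log_b m); here s is a natural number, so ceil(s) = s *)
definition Primes_ms :: "nat \<Rightarrow> nat \<Rightarrow> nat set" where
  "Primes_ms m s =
     (let b = nat \<lceil>log 2 (real m)\<rceil>;
          N = nat (1 + \<lfloor>real s * log (real b) (real m)\<rfloor>)
      in {p. prime p \<and> b < p \<and> card {q. prime q \<and> b < q \<and> q < p} < N})"

definition min0 :: "nat set \<Rightarrow> nat" where
  "min0 A = (if A = {} then 0 else Min A)"

definition monomials :: "nat \<Rightarrow> nat \<Rightarrow> (nat \<Rightarrow> nat) set" where
  "monomials n D = {e. (\<forall>j. n \<le> j \<longrightarrow> e j = 0) \<and> (\<Sum>j<n. e j) \<le> D}"

definition poly_eval :: "((nat \<Rightarrow> nat) \<Rightarrow> int) \<Rightarrow> nat \<Rightarrow> nat \<Rightarrow> (nat \<Rightarrow> int) \<Rightarrow> int" where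
  "poly_eval a n D z = (\<Sum>e\<in>monomials n D. a e * (\<Prod>j<n. z j ^ e j))"

(* the (m+1)t input bits: variable j*t+q (q<t) is bit q (coefficient of 2^q) of c(j+1) for j<m,
   and bit q of l for j = m *)
definition input_bits :: "nat \<Rightarrow> nat \<Rightarrow> (nat \<Rightarrow> nat) \<Rightarrow> nat \<Rightarrow> nat \<Rightarrow> int" where
  "input_bits m t c l j =
     (if j div t < m then int ((c (j div t + 1) div 2^(j mod t)) mod 2)
      else int ((l div 2^(j mod t)) mod 2))"

definition Ind :: "nat \<Rightarrow> (nat \<Rightarrow> nat) \<Rightarrow> nat \<Rightarrow> nat \<Rightarrow> int" where
  "Ind m c l = (\<lambda>i. if 1 \<le> i \<and> i \<le> m \<and> c i = l then 1 else 0)"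

definition b_vec :: "nat \<Rightarrow> nat \<Rightarrow> (nat \<Rightarrow> nat) \<Rightarrow> nat \<Rightarrow> (nat \<Rightarrow> int)" where
  "b_vec d p c l = SPiRiT d p (Ind (2^d) c l)"

definition idx :: "nat \<Rightarrow> nat \<Rightarrow> (nat \<Rightarrow> nat) \<Rightarrow> nat \<Rightarrow> nat" where
  "idx d p c l = 1 + (\<Sum>h=1..d. nat (b_vec d p c l h) * 2^(h - 1))"

end

theory Submission
  imports Defs "HOL-Library.FuncSet" "HOL-Number_Theory.Residues"
begin


lemma finite_monomials: "finite (monomials n D)"
proof -
  have "monomials n D \<subseteq> (\<lambda>f j. if j < n then f j else 0) ` (PiE {..<n} (\<lambda>_. {..D}))"
  proof
    fix e assume e: "e \<in> monomials n D"
    have le: "e j \<le> D" if "j < n" for j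
    proof -
      have "e j \<le> (\<Sum>j<n. e j)" using that by (intro member_le_sum) auto
      thus ?thesis using e unfolding monomials_def by auto
    qed
    have "e = (\<lambda>j. if j < n then restrict e {..<n} j else 0)"
      using e unfolding monomials_def by (auto simp: fun_eq_iff)
    moreover have "restrict e {..<n} \<in> PiE {..<n} (\<lambda>_. {..D})" using le by auto
    ultimately show "e \<in> (\<lambda>f j. if j < n then f j else 0) ` (PiE {..<n} (\<lambda>_. {..D}))" by blast
  qed
  moreover have "finite (PiE {..<n} (\<lambda>_. {..D::nat}))" by (intro finite_PiE) auto
  ultimately show ?thesis by (meson finite_imageI finite_subset)
qed

definition pr :: "('x \<Rightarrow> nat \<Rightarrow> int) \<Rightarrow> 'x set \<Rightarrow> nat \<Rightarrow> nat \<Rightarrow> nat \<Rightarrow> ('x \<Rightarrow> int) \<Rightarrow> bool" where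
  "pr V A p n D f \<longleftrightarrow> (\<exists>a. \<forall>x\<in>A. f x mod int p = poly_eval a n D (V x) mod int p)"

lemma pr_mono: assumes "pr V A p n D f" "D \<le> D'" shows "pr V A p n D' f"
proof -
  obtain a where a: "\<forall>x\<in>A. f x mod int p = poly_eval a n D (V x) mod int p"
    using assms unfolding pr_def by blast
  define a' where "a' = (\<lambda>e. if e \<in> monomials n D then a e else 0)"
  have sub: "monomials n D \<subseteq> monomials n D'" using assms(2) unfolding monomials_def by auto
  have "poly_eval a' n D' z = poly_eval a n D z" for z
    unfolding poly_eval_def a'_def
    by (rule sum.mono_neutral_cong_right[OF finite_monomials sub]) auto
  thus ?thesis unfolding pr_def using a by metis
qed

lemma pr_cong: assumes "pr V A p n D g" "\<And>x. x \<in> A \<Longrightarrow> f x mod int p = g x mod int p"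
  shows "pr V A p n D f"
  using assms unfolding pr_def by metis

lemma pr_mod: assumes "pr V A p n D g" shows "pr V A p n D (\<lambda>x. g x mod int p)"
  using assms by (rule pr_cong) simp

lemma pr_const: "pr V A p n D (\<lambda>x. k)"
proof -
  define e0 where "e0 = (\<lambda>_::nat. 0::nat)"
  define a where "a = (\<lambda>e. if e = e0 then k else 0)"
  have e0: "e0 \<in> monomials n D" unfolding monomials_def e0_def by auto
  have "poly_eval a n D z = k" for z
  proof -
    have "poly_eval a n D z = (\<Sum>e\<in>monomials n D. if e = e0 then k * (\<Prod>j<n. z j ^ e0 j) else 0)"
      unfolding poly_eval_def a_def by (rule sum.cong) auto
    also have "\<dots> = k * (\<Prod>j<n. z j ^ e0 j)" using e0 by (simp add: sum.delta[OF finite_monomials])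
    also have "\<dots> = k" by (simp add: e0_def)
    finally show ?thesis .
  qed
  thus ?thesis unfolding pr_def by metis
qed

lemma pr_var: assumes "j < n" "1 \<le> D" shows "pr V A p n D (\<lambda>x. V x j)"
proof -
  define e0 where "e0 = (\<lambda>i. if i = j then 1 else (0::nat))"
  define a where "a = (\<lambda>e. if e = e0 then 1 else (0::int))"
  have "e0 \<in> monomials n D" using assms unfolding monomials_def e0_def by auto
  moreover have "(\<Prod>i<n. z i ^ e0 i) = z j" for z :: "nat \<Rightarrow> int"
  proof -
    have "(\<Prod>i<n. z i ^ e0 i) = (\<Prod>i<n. if i = j then z j else 1)"
      by (rule prod.cong) (auto simp: e0_def)
    also have "\<dots> = z j" using assms(1) by (simp add: prod.delta)
    finally show ?thesis .
  qed
  ultimately have "poly_eval a n D z = z j" for z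
  proof -
    assume e0: "e0 \<in> monomials n D" and pe: "\<And>z. (\<Prod>i<n. z i ^ e0 i) = (z j::int)"
    have "poly_eval a n D z = (\<Sum>e\<in>monomials n D. if e = e0 then (\<Prod>i<n. z i ^ e0 i) else 0)"
      unfolding poly_eval_def a_def by (rule sum.cong) auto
    also have "\<dots> = z j" using e0 pe by (simp add: sum.delta[OF finite_monomials])
    finally show ?thesis .
  qed
  thus ?thesis unfolding pr_def by metis
qed

lemma pr_add: assumes "pr V A p n D f" "pr V A p n D g" shows "pr V A p n D (\<lambda>x. f x + g x)"
proof -
  obtain a where a: "\<forall>x\<in>A. f x mod int p = poly_eval a n D (V x) mod int p"
    using assms unfolding pr_def by blast
  obtain b where b: "\<forall>x\<in>A. g x mod int p = poly_eval b n D (V x) mod int p"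
    using assms unfolding pr_def by blast
  have pe: "poly_eval (\<lambda>e. a e + b e) n D z = poly_eval a n D z + poly_eval b n D z" for z
    unfolding poly_eval_def by (simp add: distrib_right sum.distrib)
  have "(f x + g x) mod int p = poly_eval (\<lambda>e. a e + b e) n D (V x) mod int p" if x: "x \<in> A" for x
  proof -
    have "(f x + g x) mod int p = (f x mod int p + g x mod int p) mod int p" by (simp add: mod_add_eq)
    also have "\<dots> = (poly_eval a n D (V x) mod int p + poly_eval b n D (V x) mod int p) mod int p"
      using a b x by simp
    also have "\<dots> = poly_eval (\<lambda>e. a e + b e) n D (V x) mod int p" unfolding pe by (simp add: mod_add_eq)
    finally show ?thesis .
  qed
  thus ?thesis unfolding pr_def by blast
qed

lemma pr_smult: assumes "pr V A p n D f" shows "pr V A p n D (\<lambda>x. k * f x)"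
proof -
  obtain a where a: "\<forall>x\<in>A. f x mod int p = poly_eval a n D (V x) mod int p"
    using assms unfolding pr_def by blast
  have pe: "poly_eval (\<lambda>e. k * a e) n D z = k * poly_eval a n D z" for z
    unfolding poly_eval_def by (simp add: mult.assoc sum_distrib_left)
  have "(k * f x) mod int p = poly_eval (\<lambda>e. k * a e) n D (V x) mod int p" if x: "x \<in> A" for x
  proof -
    have "(k * f x) mod int p = (k * (f x mod int p)) mod int p" by (simp add: mod_mult_right_eq)
    also have "\<dots> = (k * (poly_eval a n D (V x) mod int p)) mod int p" using a x by simp
    also have "\<dots> = poly_eval (\<lambda>e. k * a e) n D (V x) mod int p" unfolding pe by (simp add: mod_mult_right_eq)
    finally show ?thesis .
  qed
  thus ?thesis unfolding pr_def by blast
qed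

lemma pr_mult: assumes "pr V A p n D1 f" "pr V A p n D2 g" shows "pr V A p n (D1 + D2) (\<lambda>x. f x * g x)"
proof -
  obtain a1 where a1: "\<forall>x\<in>A. f x mod int p = poly_eval a1 n D1 (V x) mod int p"
    using assms unfolding pr_def by blast
  obtain a2 where a2: "\<forall>x\<in>A. g x mod int p = poly_eval a2 n D2 (V x) mod int p"
    using assms unfolding pr_def by blast
  define M1 where "M1 = monomials n D1"
  define M2 where "M2 = monomials n D2"
  define M where "M = monomials n (D1 + D2)"
  define pl where "pl = (\<lambda>(e1::nat\<Rightarrow>nat, e2::nat\<Rightarrow>nat). (\<lambda>j. e1 j + e2 j))"
  define mono where "mono = (\<lambda>e (z::nat\<Rightarrow>int). \<Prod>j<n. z j ^ e j)"
  define a where "a = (\<lambda>e. \<Sum>q\<in>{q \<in> M1 \<times> M2. pl q = e}. a1 (fst q) * a2 (snd q))"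
  have fin: "finite M1" "finite M2" "finite M" unfolding M1_def M2_def M_def by (auto intro: finite_monomials)
  have img: "pl ` (M1 \<times> M2) \<subseteq> M"
    unfolding M1_def M2_def M_def monomials_def pl_def by (auto simp: sum.distrib intro: add_mono)
  have monopl: "mono (pl q) z = mono (fst q) z * mono (snd q) z" for q z
    unfolding mono_def pl_def by (auto simp: power_add prod.distrib split: prod.splits)
  have "poly_eval a1 n D1 z * poly_eval a2 n D2 z = poly_eval a n (D1+D2) z" for z
  proof -
    have "poly_eval a1 n D1 z * poly_eval a2 n D2 z
        = (\<Sum>e1\<in>M1. \<Sum>e2\<in>M2. (a1 e1 * mono e1 z) * (a2 e2 * mono e2 z))"
      unfolding poly_eval_def M1_def M2_def mono_def by (simp add: sum_product)
    also have "\<dots> = (\<Sum>q\<in>M1 \<times> M2. a1 (fst q) * a2 (snd q) * mono (pl q) z)"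
      by (simp add: sum.cartesian_product case_prod_beta monopl algebra_simps)
    also have "\<dots> = (\<Sum>e\<in>M. \<Sum>q\<in>{q \<in> M1 \<times> M2. pl q = e}. a1 (fst q) * a2 (snd q) * mono (pl q) z)"
      by (rule sum.group[OF finite_cartesian_product[OF fin(1,2)] fin(3) img, symmetric])
    also have "\<dots> = (\<Sum>e\<in>M. a e * mono e z)"
      unfolding a_def sum_distrib_right by (intro sum.cong refl) auto
    finally show ?thesis unfolding poly_eval_def M_def mono_def by simp
  qed
  note pe = this
  have "(f x * g x) mod int p = poly_eval a n (D1+D2) (V x) mod int p" if x: "x \<in> A" for x
  proof -
    have "(f x * g x) mod int p = ((f x mod int p) * (g x mod int p)) mod int p" by (simp add: mod_mult_eq)
    also have "\<dots> = ((poly_eval a1 n D1 (V x) mod int p) * (poly_eval a2 n D2 (V x) mod int p)) mod int p"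
      using a1 a2 x by simp
    also have "\<dots> = poly_eval a n (D1+D2) (V x) mod int p" unfolding pe[symmetric] by (simp add: mod_mult_eq)
    finally show ?thesis .
  qed
  thus ?thesis unfolding pr_def by blast
qed

lemma pr_sum: assumes "finite I" "\<And>i. i \<in> I \<Longrightarrow> pr V A p n D (\<lambda>x. f x i)"
  shows "pr V A p n D (\<lambda>x. \<Sum>i\<in>I. f x i)"
  using assms
proof (induction I rule: finite_induct)
  case empty then show ?case by (simp add: pr_const)
next
  case (insert i I) then show ?case by (simp add: pr_add)
qed

lemma pr_prod: assumes "finite I" "\<And>i. i \<in> I \<Longrightarrow> pr V A p n D (\<lambda>x. f x i)"
  shows "pr V A p n (card I * D) (\<lambda>x. \<Prod>i\<in>I. f x i)"
  using assms
proof (induction I rule: finite_induct)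
  case empty then show ?case by (simp add: pr_const)
next
  case (insert i I)
  have "pr V A p n (D + card I * D) (\<lambda>x. f x i * (\<Prod>i\<in>I. f x i))"
    using insert by (intro pr_mult) auto
  then show ?case using insert by simp
qed

lemma pr_power: assumes "pr V A p n D f" shows "pr V A p n (k * D) (\<lambda>x. f x ^ k)"
  using pr_prod[of "{..<k}" V A p n D "\<lambda>x i. f x"] assms by simp


lemma bits_sum: "(\<Sum>q<t. (n div 2^q mod 2) * 2^q) = (n::nat) mod 2^t"
proof (induction t)
  case 0 then show ?case by simp
next
  case (Suc t)
  have "n mod 2^Suc t = 2^t * (n div 2^t mod 2) + n mod 2^t"
    by (metis mod_mult2_eq mult.commute power_Suc2)
  then show ?case using Suc by simp
qed

lemma bits_eq: assumes "(x::nat) < 2^t" "y < 2^t" "\<forall>q<t. x div 2^q mod 2 = y div 2^q mod 2"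
  shows "x = y"
proof -
  have "x = (\<Sum>q<t. (x div 2^q mod 2) * 2^q)" using bits_sum[where t=t and n=x] assms by simp
  also have "\<dots> = (\<Sum>q<t. (y div 2^q mod 2) * 2^q)" using assms(3) by simp
  also have "\<dots> = y" using bits_sum[where t=t and n=y] assms by simp
  finally show ?thesis .
qed

lemma prod_indicator: "finite I \<Longrightarrow> (\<Prod>q\<in>I. if P q then 1 else (0::int)) = (if \<forall>q\<in>I. P q then 1 else 0)"
  by (induction I rule: finite_induct) auto

lemma pr_matvec: assumes "\<And>i. pr V A p n D (\<lambda>x. X x i)"
  shows "pr V A p n D (\<lambda>x. mat_vec M N (X x) k)"
  unfolding mat_vec_def using assms by (intro pr_sum pr_smult) auto

lemma pr_vmod: assumes "pr V A p n D (\<lambda>x. Y x k)"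
  shows "pr V A p n D (\<lambda>x. vmod (Y x) p k)"
  unfolding vmod_def using assms by (rule pr_mod)

lemma pr_ip: assumes "pr V A p n D (\<lambda>x. Y x k)"
  shows "pr V A p n ((p-1)*D) (\<lambda>x. ip p (Y x) k)"
  unfolding ip_def using assms by (intro pr_mod pr_power)

lemma pr_Ind:
  fixes d t r :: nat
  assumes t: "t \<ge> 1" and rt: "r \<le> 2^t"
  defines "V \<equiv> (\<lambda>x. input_bits (2^d) t (fst x) (snd x))"
  defines "A \<equiv> {x. (\<forall>i\<in>{1..(2::nat)^d}. fst x i < r) \<and> snd x < r}"
  shows "pr V A p ((2^d+1)*t) (2*t) (\<lambda>x. Ind (2^d) (fst x) (snd x) i)"
proof (cases "1 \<le> i \<and> i \<le> 2^d")
  case False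
  then have "(\<lambda>x. Ind (2^d) (fst x) (snd x) i) = (\<lambda>x. 0)" by (auto simp: Ind_def fun_eq_iff)
  then show ?thesis using pr_const by metis
next
  case True
  define m :: nat where "m = 2^d"
  define X where "X = (\<lambda>x q. V x ((i-1)*t + q))"
  define Y where "Y = (\<lambda>x q. V x (m*t + q))"
  have Xv: "X x q = int ((fst x i div 2^q) mod 2)" if "q < t" for x q
  proof -
    have "((i-1)*t + q) div t = i - 1" "((i-1)*t + q) mod t = q" using that by simp_all
    moreover have "i - 1 < m" using True m_def by auto
    ultimately show ?thesis using True unfolding X_def V_def input_bits_def m_def by simp
  qed
  have Yv: "Y x q = int ((snd x div 2^q) mod 2)" if "q < t" for x q
  proof -
    have "(m*t + q) div t = m" "(m*t + q) mod t = q" using that by simp_all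
    thus ?thesis unfolding Y_def V_def input_bits_def m_def by simp
  qed
  have eq: "Ind (2^d) (fst x) (snd x) i = (\<Prod>q<t. 1 - (X x q - Y x q) * (X x q - Y x q))"
    if "x \<in> A" for x
  proof -
    have "(\<Prod>q<t. 1 - (X x q - Y x q) * (X x q - Y x q))
        = (\<Prod>q<t. if fst x i div 2^q mod 2 = snd x div 2^q mod 2 then 1 else 0)"
    proof (rule prod.cong[OF refl])
      fix q assume "q \<in> {..<t}"
      hence q: "q < t" by simp
      have "fst x i div 2^q mod 2 < 2" "snd x div 2^q mod 2 < 2" by auto
      then show "1 - (X x q - Y x q) * (X x q - Y x q) = (if fst x i div 2^q mod 2 = snd x div 2^q mod 2 then 1 else 0)"
        unfolding Xv[OF q] Yv[OF q]
        by (cases "fst x i div 2^q mod 2"; cases "snd x div 2^q mod 2") auto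
    qed
    also have "\<dots> = (if \<forall>q<t. fst x i div 2^q mod 2 = snd x div 2^q mod 2 then 1 else 0)"
      by (simp add: prod_indicator)
    also have "\<dots> = (if fst x i = snd x then 1 else 0)"
    proof -
      have "fst x i < r" "snd x < r" using that True unfolding A_def by auto
      hence "fst x i < 2^t" "snd x < 2^t" using rt by auto
      thus ?thesis using bits_eq by metis
    qed
    finally show ?thesis using True unfolding Ind_def by simp
  qed
  have vars: "(i-1)*t + q < (2^d+1)*t" "m*t + q < (2^d+1)*t" if "q < t" for q
  proof -
    have "i - 1 + 1 \<le> 2^d" using True by auto
    hence "(i-1)*t + t \<le> 2^d * t" by (metis add_mult_distrib mult_1 mult_le_mono1)
    thus "(i-1)*t + q < (2^d+1)*t" using that by (simp add: algebra_simps)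
    show "m*t + q < (2^d+1)*t" using that by (simp add: m_def algebra_simps)
  qed
  have fac: "pr V A p ((2^d+1)*t) 2 (\<lambda>x. 1 - (X x q - Y x q) * (X x q - Y x q))" if "q < t" for q
  proof -
    have v1: "pr V A p ((2^d+1)*t) 1 (\<lambda>x. X x q)" unfolding X_def
      by (rule pr_var) (use vars(1)[OF that] in simp_all)
    have v2: "pr V A p ((2^d+1)*t) 1 (\<lambda>x. Y x q)" unfolding Y_def
      by (rule pr_var) (use vars(2)[OF that] in simp_all)
    have "pr V A p ((2^d+1)*t) 1 (\<lambda>x. X x q + (-1) * Y x q)"
      by (rule pr_add[OF v1 pr_smult[OF v2]])
    hence d: "pr V A p ((2^d+1)*t) 1 (\<lambda>x. X x q - Y x q)" by simp
    have m: "pr V A p ((2^d+1)*t) 2 (\<lambda>x. (X x q - Y x q) * (X x q - Y x q))"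
      using pr_mult[OF d d] by (simp only: one_add_one)
    have "pr V A p ((2^d+1)*t) 2 (\<lambda>x. 1 + (-1) * ((X x q - Y x q) * (X x q - Y x q)))"
      by (rule pr_add[OF pr_const pr_smult[OF m]])
    thus ?thesis by simp
  qed
  have "pr V A p ((2^d+1)*t) (card {..<t} * 2) (\<lambda>x. \<Prod>q<t. 1 - (X x q - Y x q) * (X x q - Y x q))"
    using fac by (intro pr_prod) simp_all
  hence "pr V A p ((2^d+1)*t) (2*t) (\<lambda>x. \<Prod>q<t. 1 - (X x q - Y x q) * (X x q - Y x q))"
    by (simp add: mult.commute)
  thus ?thesis by (rule pr_cong) (simp only: eq)
qed

lemma part4:
  assumes t: "t \<ge> 1" and rt: "r \<le> 2^t"
  shows "\<exists>a. \<forall>c' l'. (\<forall>i\<in>{1..2^d}. c' i < r) \<and> l' < r \<longrightarrow>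
             b_vec d p c' l' h = poly_eval a ((2^d + 1) * t) (2 * t * (p - 1)^2)
                   (input_bits (2^d) t c' l') mod int p"
proof -
  define V where "V \<equiv> (\<lambda>x. input_bits (2^d) t (fst x) (snd x))"
  define A where "A \<equiv> {x. (\<forall>i\<in>{1..(2::nat)^d}. fst x i < r) \<and> snd x < r}"
  define n where "n = (2^d+1)*t"
  have s0: "pr V A p n (2*t) (\<lambda>x. Ind (2^d) (fst x) (snd x) i)" for i
    unfolding V_def A_def n_def using pr_Ind[OF t rt] by blast
  have s1: "pr V A p n ((p-1)*(2*t)) (\<lambda>x. ip p (vmod (mat_vec (tree_mat d) (2^d) (Ind (2^d) (fst x) (snd x))) p) k)" for k
    by (intro pr_ip pr_vmod pr_matvec s0)
  have s2: "pr V A p n ((p-1)*((p-1)*(2*t))) (\<lambda>x. ip p (vmod (mat_vec (roots_mat d) (2 * 2^d - 1)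
          (ip p (vmod (mat_vec (tree_mat d) (2^d) (Ind (2^d) (fst x) (snd x))) p))) p) k)" for k
    by (intro pr_ip pr_vmod pr_matvec s1)
  have s3: "pr V A p n ((p-1)*((p-1)*(2*t))) (\<lambda>x. b_vec d p (fst x) (snd x) h)"
    unfolding b_vec_def SPiRiT_def
    by (intro pr_vmod pr_matvec s2)
  have deg: "(p-1)*((p-1)*(2*t)) = 2 * t * (p - 1)^2" by (simp add: power2_eq_square)
  obtain a where a: "\<forall>x\<in>A. b_vec d p (fst x) (snd x) h mod int p = poly_eval a n (2 * t * (p - 1)^2) (V x) mod int p"
    using s3 unfolding pr_def deg by blast
  have bm: "b_vec d p c' l' h mod int p = b_vec d p c' l' h" for c' l'
    unfolding b_vec_def SPiRiT_def vmod_def by simp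
  show ?thesis
  proof (intro exI allI impI)
    fix c' :: "nat \<Rightarrow> nat" and l' :: nat assume "(\<forall>i\<in>{1..2^d}. c' i < r) \<and> l' < r"
    hence "(c', l') \<in> A" unfolding A_def by simp
    from a[rule_format, OF this] show "b_vec d p c' l' h = poly_eval a ((2^d + 1) * t) (2 * t * (p - 1)^2)
                   (input_bits (2^d) t c' l') mod int p"
      unfolding V_def n_def bm by simp
  qed
qed


lemma node_range:
  assumes "1 \<le> i" "i \<le> (2::nat)^d" "h \<le> d"
  shows "2^(d-h) \<le> (2^d+i-1) div 2^h" "(2^d+i-1) div 2^h < 2^(d-h+1)"
proof -
  have e1: "(2::nat)^(d-h) * 2^h = 2^d" using assms(3) by (simp add: power_add[symmetric])
  have e2: "(2::nat)^(d-h+1) * 2^h = 2 * 2^d" using assms(3) by (simp add: power_add[symmetric])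
  have "2^(d-h) * 2^h \<le> 2^d+i-1" using assms e1 by simp
  thus "2^(d-h) \<le> (2^d+i-1) div 2^h" by (simp add: less_eq_div_iff_mult_less_eq)
  have "2^d+i-1 < 2^(d-h+1) * 2^h" using assms e2 by simp
  thus "(2^d+i-1) div 2^h < 2^(d-h+1)" by (rule less_mult_imp_div_less)
qed

lemma level_unique:
  assumes "(2::nat)^a \<le> k" "k < 2^(a+1)" "2^b \<le> k" "k < 2^(b+1)"
  shows "a = b"
proof (rule ccontr)
  assume "a \<noteq> b"
  then consider "a+1 \<le> b" | "b+1 \<le> a" by linarith
  then show False
  proof cases
    case 1 then have "(2::nat)^(a+1) \<le> 2^b" by (rule power_increasing) simp
    then show False using assms by linarith
  next
    case 2 then have "(2::nat)^(b+1) \<le> 2^a" by (rule power_increasing) simp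
    then show False using assms by linarith
  qed
qed

lemma Anc_eq: "Anc d i = (\<lambda>h. (2^d+i-1) div 2^h) ` {..d}"
  unfolding Anc_def by auto

lemma finite_Anc: "finite (Anc d i)" unfolding Anc_eq by simp

lemma card_Anc: "card (Anc d i) \<le> d + 1"
  unfolding Anc_eq using card_image_le[of "{..d}"] by simp

lemma root_in:
  assumes "1 \<le> i" "i \<le> (2::nat)^d"
  shows "1 \<in> Anc d i"
proof -
  have "1 \<le> (2^d+i-1) div 2^d" "(2^d+i-1) div 2^d < 2" using node_range[OF assms, of d] by auto
  hence "(2^d+i-1) div 2^d = 1" by linarith
  thus ?thesis unfolding Anc_def by force
qed

lemma leaf_in: "2^d+i-1 \<in> Anc d i"
  unfolding Anc_def by force

lemma leaf_unique:
  assumes "1 \<le> i" "i \<le> (2::nat)^d" "1 \<le> i'" "i' \<le> (2::nat)^d" "2^d+i'-1 \<in> Anc d i"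
  shows "i = i'"
proof -
  obtain h where h: "h \<le> d" "(2^d+i-1) div 2^h = 2^d+i'-1" using assms(5) unfolding Anc_def by auto
  have r1: "2^(d-h) \<le> 2^d+i'-1" "2^d+i'-1 < 2^(d-h+1)" using node_range[OF assms(1,2) h(1)] h(2) by auto
  have r2: "2^(d-0) \<le> 2^d+i'-1" "2^d+i'-1 < 2^(d-0+1)" using node_range[OF assms(3,4), of 0] by auto
  have "d - h = d - 0" using level_unique[OF r1 r2] .
  hence "h = 0" using h(1) by simp
  thus ?thesis using h(2) assms by simp
qed

lemma Lop_eq: "Lop d j = (\<lambda>k. k - 1) ` {k \<in> Anc d j. odd k \<and> 3 \<le> k}"
  unfolding Lop_def by auto

lemma finite_Lop: "finite (Lop d j)" unfolding Lop_eq using finite_Anc by simp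

lemma card_Lop:
  assumes "1 \<le> j" "j \<le> (2::nat)^d"
  shows "card (Lop d j) \<le> d"
proof -
  have "card (Lop d j) \<le> card {k \<in> Anc d j. odd k \<and> 3 \<le> k}"
    unfolding Lop_eq by (rule card_image_le) (simp add: finite_Anc)
  also have "\<dots> \<le> card (Anc d j - {1})"
    by (rule card_mono) (auto simp: finite_Anc)
  also have "\<dots> = card (Anc d j) - 1" using root_in[OF assms] by (simp add: finite_Anc)
  also have "\<dots> \<le> d" using card_Anc[of d j] by simp
  finally show ?thesis .
qed

lemma Lop_range:
  assumes "1 \<le> j" "j \<le> (2::nat)^d" "k \<in> Lop d j"
  shows "k \<in> {1..2*2^d-1}"
proof -
  obtain k' h where k': "k = k' - 1" "3 \<le> k'" "h \<le> d" "k' = (2^d+j-1) div 2^h"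
    using assms(3) unfolding Lop_def Anc_def by auto
  have "k' \<le> 2^d+j-1" using k'(4) by simp
  hence "k \<le> 2*2^d - 1" "1 \<le> k" using k'(1,2) assms(2) by linarith+
  thus ?thesis by simp
qed

lemma Lop_disjoint:
  assumes j: "1 \<le> j" "j \<le> (2::nat)^d" and i: "j \<le> i" "i \<le> 2^d"
    and k: "k \<in> Lop d j"
  shows "k \<notin> Anc d i"
proof
  assume ki: "k \<in> Anc d i"
  obtain B h where B: "k = B - 1" "odd B" "3 \<le> B" "h \<le> d" "B = (2^d+j-1) div 2^h"
    using k unfolding Lop_def Anc_def by auto
  have rB: "2^(d-h) \<le> B" "B < 2^(d-h+1)" using node_range[OF j B(4)] B(5) by auto
  have "d - h \<noteq> 0"
  proof
    assume "d - h = 0" thus False using rB B(3) by simp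
  qed
  hence "even ((2::nat)^(d-h))" by simp
  hence "B \<noteq> 2^(d-h)" using B(2) by auto
  hence rk: "2^(d-h) \<le> k" "k < 2^(d-h+1)" using rB B(1) by auto
  obtain h' where h': "h' \<le> d" "k = (2^d+i-1) div 2^h'" using ki unfolding Anc_def by auto
  have i1: "1 \<le> i" using i j by simp
  have rk': "2^(d-h') \<le> k" "k < 2^(d-h'+1)" using node_range[OF i1 i(2) h'(1)] h'(2) by auto
  have "d - h = d - h'" using level_unique[OF rk rk'] .
  hence "h = h'" using B(4) h'(1) by simp
  hence "B \<le> k" using h'(2) B(5) i(1) by (simp add: div_le_mono)
  thus False using B(1) B(3) by simp
qed

lemma div2_adj: assumes "(A::nat) div 2 = B div 2" "A < B" shows "B = A + 1" "even A"
proof -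
  have a: "A = 2 * (A div 2) + A mod 2" and b: "B = 2 * (B div 2) + B mod 2" by simp_all
  have "A mod 2 < B mod 2" using assms a b by linarith
  hence "A mod 2 = 0" "B mod 2 = 1" by auto
  thus "B = A + 1" "even A" using a b assms(1) by auto
qed

lemma Lop_exists:
  assumes "1 \<le> i'" "i' \<le> j" "j < (2::nat)^d"
  shows "\<exists>k \<in> Lop d (j+1). k \<in> Anc d i'"
proof -
  define a where "a = 2^d + i' - 1"
  define b where "b = (2::nat)^d + j"
  define P where "P = (\<lambda>h. a div 2^h = b div 2^h)"
  have i'm: "i' \<le> 2^d" using assms by simp
  have j1: "1 \<le> j + 1" "j + 1 \<le> 2^d" using assms by auto
  have bj: "b = 2^d + (j+1) - 1" unfolding b_def by simp
  have "a div 2^d = 1"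
    using node_range[OF assms(1) i'm, of d] unfolding a_def by auto
  moreover have "b div 2^d = 1"
    using node_range[OF j1, of d] unfolding bj by auto
  ultimately have Pd: "P d" unfolding P_def by simp
  define h0 where "h0 = (LEAST h. P h)"
  have Ph0: "P h0" unfolding h0_def using Pd by (rule LeastI)
  have h0d: "h0 \<le> d" unfolding h0_def using Pd by (rule Least_le)
  have ab: "a < b" unfolding a_def b_def using assms by simp
  have "h0 \<noteq> 0"
  proof
    assume "h0 = 0" then have "a = b" using Ph0 unfolding P_def by simp
    with ab show False by simp
  qed
  define g where "g = h0 - 1"
  have hg: "h0 = g + 1" using \<open>h0 \<noteq> 0\<close> g_def by simp
  have nPg: "\<not> P g" unfolding g_def h0_def
    by (rule not_less_Least) (use \<open>h0 \<noteq> 0\<close> in \<open>simp add: h0_def[symmetric]\<close>)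
  define A where "A = a div 2^g"
  define B where "B = b div 2^g"
  have "A div 2 = a div 2^h0" unfolding A_def hg by (metis div_mult2_eq power_Suc2 Suc_eq_plus1)
  moreover have "B div 2 = b div 2^h0" unfolding B_def hg by (metis div_mult2_eq power_Suc2 Suc_eq_plus1)
  ultimately have AB2: "A div 2 = B div 2" using Ph0 unfolding P_def by simp
  have "A \<le> B" unfolding A_def B_def using ab by (simp add: div_le_mono)
  moreover have "A \<noteq> B" using nPg unfolding P_def A_def B_def by simp
  ultimately have "A < B" by simp
  with AB2 have AB: "B = A + 1" "even A" using div2_adj by blast+
  have gd: "g \<le> d" "g < d" using h0d hg by auto
  have Banc: "B \<in> Anc d (j+1)" unfolding Anc_def B_def bj using gd(1) by blast
  have "2^(d-g) \<le> B" using node_range[OF j1 gd(1)] unfolding B_def bj by simp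
  moreover have "(2::nat) \<le> 2^(d-g)"
  proof -
    have "1 \<le> d - g" using gd(2) by simp
    hence "(2::nat)^1 \<le> 2^(d-g)" by (rule power_increasing) simp
    thus ?thesis by simp
  qed
  ultimately have "2 \<le> B" by simp
  moreover have "odd B" using AB by simp
  ultimately have B3: "3 \<le> B" by (cases "B = 2") auto
  have "A \<in> Lop d (j+1)" unfolding Lop_def using Banc AB B3 by force
  moreover have "A \<in> Anc d i'" unfolding Anc_def A_def a_def using gd(1) by blast
  ultimately show ?thesis by blast
qed


lemma ip_val: assumes "prime p" "0 \<le> y"
  shows "(y mod int p)^(p-1) mod int p = (if int p dvd y then 0 else 1)"
proof -
  obtain n where n: "y = int n" using assms(2) nonneg_int_cases by metis
  have p1: "p > 1" using prime_gt_1_nat assms(1) by simp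
  show ?thesis
  proof (cases "p dvd n")
    case True
    hence "y mod int p = 0" using n by (simp flip: of_nat_mod)
    moreover have "int p dvd y" using True n by simp
    moreover obtain e where "p - 1 = Suc e" using p1 by (cases "p - 1") auto
    ultimately show ?thesis by simp
  next
    case False
    have "[n^(p-1) = 1] (mod p)" by (rule fermat_theorem[OF assms(1) False])
    hence e: "n^(p-1) mod p = 1" using p1 unfolding cong_def by simp
    have "(y mod int p)^(p-1) mod int p = y^(p-1) mod int p" by (simp add: power_mod)
    also have "\<dots> = int (n^(p-1) mod p)" by (simp add: n of_nat_mod)
    also have "\<dots> = 1" using e by simp
    finally show ?thesis using False n by simp
  qed
qed

lemma pair_sum:
  assumes "1 \<le> k" "k \<le> N"
  shows "mat_vec pair_mat N z k = z k - (if 2 \<le> k then z (k-1) else 0)"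
proof -
  have "mat_vec pair_mat N z k = (\<Sum>i=1..N. (if i = k then z i else 0) + (if i = k - 1 \<and> 2 \<le> k then - z i else 0))"
    unfolding mat_vec_def pair_mat_def by (rule sum.cong) auto
  also have "\<dots> = (\<Sum>i=1..N. if i = k then z i else 0) + (\<Sum>i=1..N. if i = k - 1 \<and> 2 \<le> k then - z i else 0)"
    by (rule sum.distrib)
  also have "(\<Sum>i=1..N. if i = k then z i else 0) = z k" using assms by (simp add: sum.delta)
  also have "(\<Sum>i=1..N. if i = k - 1 \<and> 2 \<le> k then - z i else 0) = (if 2 \<le> k then - z (k-1) else 0)"
  proof (cases "2 \<le> k")
    case True
    then have "(\<Sum>i=1..N. if i = k - 1 \<and> 2 \<le> k then - z i else 0) = (\<Sum>i=1..N. if i = k - 1 then - z i else 0)"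
      by simp
    also have "\<dots> = - z (k-1)"
    proof -
      have "k - 1 \<in> {1..N}" using True assms by auto
      thus ?thesis by (simp add: sum.delta)
    qed
    finally show ?thesis using True by simp
  qed simp
  finally show ?thesis by simp
qed

lemma idx_sum:
  assumes "1 \<le> s" "s \<le> (2::nat)^d"
  shows "1 + (\<Sum>h=1..d. ((s-1) div 2^(h-1) mod 2) * 2^(h-1)) = s"
proof -
  have "(\<Sum>h=1..d. ((s-1) div 2^(h-1) mod 2) * 2^(h-1)) = (\<Sum>q<d. ((s-1) div 2^q mod 2) * 2^q)"
  proof -
    have "{1..d} = Suc ` {..<d}"
    proof
      show "{1..d} \<subseteq> Suc ` {..<d}"
      proof
        fix x assume "x \<in> {1..d}"
        hence "x = Suc (x-1)" "x - 1 \<in> {..<d}" by auto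
        thus "x \<in> Suc ` {..<d}" by blast
      qed
    qed auto
    hence "(\<Sum>h=1..d. ((s-1) div 2^(h-1) mod 2) * 2^(h-1)) = (\<Sum>h\<in>Suc ` {..<d}. ((s-1) div 2^(h-1) mod 2) * 2^(h-1))"
      by simp
    also have "\<dots> = (\<Sum>q<d. ((s-1) div 2^q mod 2) * 2^q)" by (subst sum.reindex) auto
    finally show ?thesis .
  qed
  also have "\<dots> = (s - 1) mod 2^d" by (rule bits_sum)
  also have "\<dots> = s - 1" using assms by simp
  finally show ?thesis using assms by simp
qed


lemma good_prime_idx:
  fixes d p :: nat and c :: "nat \<Rightarrow> nat" and l :: nat
  assumes p: "prime p" "d < p" and I: "{i \<in> {1..2^d}. c i = l} \<noteq> {}"
    and good: "\<forall>k\<in>Anc d (Min {i \<in> {1..2^d}. c i = l}). \<not> int p dvd mat_vec (tree_mat d) (2^d) (Ind (2^d) c l) k"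
  shows "idx d p c l = Min {i \<in> {1..2^d}. c i = l}"
proof -
  define I where "I = {i \<in> {1..(2::nat)^d}. c i = l}"
  define s where "s = Min I"
  define x where "x = Ind (2^d) c l"
  define cnt where "cnt = mat_vec (tree_mat d) (2^d) x"
  have finI: "finite I" unfolding I_def by simp
  have sI: "s \<in> I" unfolding s_def using finI I I_def by (intro Min_in) auto
  have s1: "1 \<le> s" "s \<le> 2^d" using sI unfolding I_def by auto
  have smin: "s \<le> i" if "i \<in> I" for i unfolding s_def using finI that by simp
  have good': "\<forall>k\<in>Anc d s. \<not> int p dvd cnt k" using good unfolding s_def I_def cnt_def x_def by simp
  have p1: "p > 1" using prime_gt_1_nat p(1) by simp
  have x01: "x i = (if i \<in> I then 1 else 0)" for i unfolding x_def Ind_def I_def by auto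
  have cnt_nn: "0 \<le> cnt k" for k
    unfolding cnt_def mat_vec_def tree_mat_def x01 by (intro sum_nonneg) auto
  define z1 where "z1 = ip p (vmod cnt p)"
  have z1v: "z1 k = (if int p dvd cnt k then 0 else 1)" for k
    unfolding z1_def ip_def vmod_def using ip_val[OF p(1) cnt_nn] by simp
  define w where "w = mat_vec (roots_mat d) (2*2^d-1) z1"
  define L where "L = (\<lambda>j. Lop d (j+1))"
  have w_low: "w j = (\<Sum>k\<in>L j. z1 k)" if j: "1 \<le> j" "j \<le> 2^d - 1" for j
  proof -
    have j2: "1 \<le> j + 1" "j + 1 \<le> 2^d" using j by auto
    have sub: "L j \<subseteq> {1..2*2^d-1}" unfolding L_def using Lop_range[OF j2] by blast
    have "w j = (\<Sum>k\<in>{1..2*2^d-1}. if k \<in> L j then z1 k else 0)"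
      unfolding w_def mat_vec_def roots_mat_def L_def using j by (intro sum.cong) auto
    also have "\<dots> = sum z1 ({1..2*2^d-1} \<inter> L j)" by (simp add: sum.inter_restrict)
    also have "{1..2*2^d-1} \<inter> L j = L j" using sub by blast
    finally show ?thesis .
  qed
  have w_top: "w (2^d) = z1 1"
  proof -
    have "w (2^d) = (\<Sum>k\<in>{1..2*2^d-1}. if k = 1 then z1 k else 0)"
      unfolding w_def mat_vec_def roots_mat_def by (intro sum.cong) auto
    also have "\<dots> = z1 1"
    proof -
      have "(1::nat) \<le> 2^d" by simp
      hence "(1::nat) \<le> 2*2^d-1" by linarith
      hence "(1::nat) \<in> {1..2*2^d-1}" by simp
      thus ?thesis by (simp add: sum.delta)
    qed
    finally show ?thesis .
  qed
  have z1nn: "0 \<le> z1 k" "z1 k \<le> 1" for k using z1v[of k] by auto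
  have w_nn: "0 \<le> w j" for j
    unfolding w_def mat_vec_def roots_mat_def using z1nn by (intro sum_nonneg) auto
  define z2 where "z2 = ip p (vmod w p)"
  have z2v: "z2 j = (if int p dvd w j then 0 else 1)" for j
    unfolding z2_def ip_def vmod_def using ip_val[OF p(1) w_nn] by simp
  have z2s: "z2 j = (if s \<le> j then 1 else 0)" if j: "1 \<le> j" "j \<le> 2^d" for j
  proof (cases "j = 2^d")
    case True
    have "1 \<in> Anc d s" using root_in[OF s1] .
    hence "z1 1 = 1" using good' z1v by simp
    hence "w j = 1" using w_top True by simp
    thus ?thesis using True s1 p1 z2v[of j] by auto
  next
    case False
    hence j': "1 \<le> j" "j \<le> 2^d - 1" using j by auto
    show ?thesis
    proof (cases "s \<le> j")
      case True
      have "j < 2^d" using j' by simp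
      from Lop_exists[OF s1(1) True this] obtain k where k: "k \<in> L j" "k \<in> Anc d s"
        unfolding L_def by blast
      have z1k: "z1 k = 1" using good' k(2) z1v by simp
      have fL: "finite (L j)" unfolding L_def by (rule finite_Lop)
      have "1 \<le> w j" unfolding w_low[OF j'] using member_le_sum[OF k(1) _ fL, of z1] z1nn z1k by simp
      moreover have "w j \<le> int (card (L j))"
        unfolding w_low[OF j'] using sum_bounded_above[of "L j" z1 1] z1nn by simp
      moreover have "card (L j) \<le> d" unfolding L_def by (rule card_Lop) (use j' in auto)
      ultimately have "0 < w j" "w j < int p" using p(2) by linarith+
      hence "\<not> int p dvd w j" using zdvd_imp_le by fastforce
      thus ?thesis using True z2v by simp
    next
      case False
      have "cnt k = 0" if k: "k \<in> L j" for k
      proof -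
        have "(if k \<in> Anc d i then 1 else 0) * x i = 0" if i: "i \<in> {1..2^d}" for i
        proof (cases "i \<in> I")
          case True
          hence "j + 1 \<le> i" using smin False by fastforce
          hence "k \<notin> Anc d i" using Lop_disjoint[of "j+1" d i k] k i j' unfolding L_def by auto
          thus ?thesis by simp
        next
          case False thus ?thesis by (simp add: x01)
        qed
        thus ?thesis unfolding cnt_def mat_vec_def tree_mat_def by (intro sum.neutral) auto
      qed
      hence "\<forall>k\<in>L j. z1 k = 0" using z1v by simp
      hence "w j = 0" using w_low[OF j'] by simp
      thus ?thesis using False z2v by simp
    qed
  qed
  define u where "u = mat_vec pair_mat (2^d) z2"
  have uv: "u k = (if k = s then 1 else 0)" if k: "1 \<le> k" "k \<le> 2^d" for k
  proof -
    have "u k = z2 k - (if 2 \<le> k then z2 (k-1) else 0)" unfolding u_def using pair_sum[OF k] .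
    thus ?thesis using z2s[OF k] z2s[of "k-1"] k s1 by (cases "2 \<le> k") auto
  qed
  have bv: "b_vec d p c l = vmod (mat_vec sketch_mat (2^d) u) p"
    unfolding b_vec_def SPiRiT_def u_def z2_def w_def z1_def cnt_def x_def by simp
  have bh: "b_vec d p c l h = int ((s - 1) div 2^(h-1) mod 2)" for h
  proof -
    have "mat_vec sketch_mat (2^d) u h = (\<Sum>k\<in>{1..2^d}. if k = s then sketch_mat h k else 0)"
      unfolding mat_vec_def using uv by (intro sum.cong) auto
    also have "\<dots> = sketch_mat h s" using s1 by (simp add: sum.delta)
    finally have "mat_vec sketch_mat (2^d) u h = int ((s - 1) div 2^(h-1) mod 2)"
      unfolding sketch_mat_def .
    moreover have "int ((s - 1) div 2^(h-1) mod 2) mod int p = int ((s - 1) div 2^(h-1) mod 2)"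
      using p1 by (intro mod_pos_pos_trivial) auto
    ultimately show ?thesis unfolding bv vmod_def by simp
  qed
  have "idx d p c l = 1 + (\<Sum>h=1..d. ((s-1) div 2^(h-1) mod 2) * 2^(h-1))"
    unfolding idx_def bh by simp
  also have "\<dots> = s" by (rule idx_sum[OF s1])
  finally show ?thesis unfolding s_def I_def .
qed


lemma prod_primes_dvd:
  fixes n :: nat
  assumes "finite Q" "\<forall>q\<in>Q. prime q \<and> q dvd n"
  shows "\<Prod>Q dvd n"
  using assms
proof (induction Q rule: finite_induct)
  case empty then show ?case by simp
next
  case (insert q Q)
  have "coprime q (\<Prod>Q)"
    using insert by (intro prod_coprime_right) (auto intro: primes_coprime)
  then show ?case using insert by (simp add: divides_mult)
qed


lemma card_bad_bound:
  fixes P d :: nat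
  assumes "0 < P" "P \<le> 2^(d*d)" "d \<ge> 2"
  shows "real (card {q. prime q \<and> d < q \<and> q dvd P}) \<le> real d * log (real d) (real (2^d))"
proof -
  define B where "B = {q. prime q \<and> d < q \<and> q dvd P}"
  have "B \<subseteq> {..P}" unfolding B_def using assms(1) by (auto intro: dvd_imp_le)
  hence finB: "finite B" by (rule finite_subset) simp
  have "(\<Prod>q\<in>B. d+1) \<le> (\<Prod>q\<in>B. q)" by (rule prod_mono) (auto simp: B_def)
  hence "(d+1)^card B \<le> \<Prod>B" by simp
  moreover have "\<Prod>B \<le> P" using prod_primes_dvd[OF finB] assms(1) unfolding B_def
    by (intro dvd_imp_le) auto
  moreover have "d^card B \<le> (d+1)^card B" by (rule power_mono) auto
  ultimately have "d^card B \<le> 2^(d*d)" using assms(2) by linarith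
  hence "real (d^card B) \<le> real (2^(d*d))" by (simp only: of_nat_le_iff)
  hence "real d ^ card B \<le> (2^d)^d" by (simp add: power_mult)
  hence "real d powr real (card B) \<le> (2^d)^d" using assms(3) by (simp add: powr_realpow)
  hence "real (card B) \<le> log (real d) ((2^d)^d)" using assms(3) by (subst le_log_iff) auto
  also have "\<dots> = real d * log (real d) (2^d)" by (simp add: log_nat_power)
  finally show ?thesis unfolding B_def by simp
qed


lemma exists_good_prime:
  fixes d :: nat and c :: "nat \<Rightarrow> nat" and l :: nat
  assumes d2: "2 \<le> d" and I: "{i \<in> {1..2^d}. c i = l} \<noteq> {}"
  shows "\<exists>p\<in>Primes_ms (2^d) d. idx d p c l = Min {i \<in> {1..2^d}. c i = l}"
proof -
  define I where "I = {i \<in> {1..(2::nat)^d}. c i = l}"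
  define s where "s = Min I"
  define x where "x = Ind (2^d) c l"
  define cnt where "cnt = mat_vec (tree_mat d) (2^d) x"
  have finI: "finite I" unfolding I_def by simp
  have sI: "s \<in> I" unfolding s_def using finI I I_def by (intro Min_in) auto
  have s1: "1 \<le> s" "s \<le> 2^d" using sI unfolding I_def by auto
  have x01: "x i = (if i \<in> I then 1 else 0)" for i unfolding x_def Ind_def I_def by auto
  have cnt_le: "cnt k \<le> 2^d" for k
  proof -
    have "cnt k \<le> of_nat (card {1..(2::nat)^d}) * 1"
      unfolding cnt_def mat_vec_def tree_mat_def x01 by (intro sum_bounded_above) auto
    thus ?thesis by simp
  qed
  have cnt_ge: "1 \<le> cnt k" if k: "k \<in> Anc d s" for k
  proof -
    have "(if k \<in> Anc d s then 1 else 0) * x s \<le> cnt k"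
      unfolding cnt_def mat_vec_def tree_mat_def
      by (rule member_le_sum) (use s1 in \<open>auto simp: x01\<close>)
    thus ?thesis using k sI x01 by simp
  qed
  have leaf: "cnt (2^d+s-1) = 1"
  proof -
    have "cnt (2^d+s-1) = (\<Sum>i\<in>{1..2^d}. if i = s then 1 else 0)"
      unfolding cnt_def mat_vec_def tree_mat_def
    proof (rule sum.cong[OF refl])
      fix i assume i: "i \<in> {1..(2::nat)^d}"
      show "(if 2^d+s-1 \<in> Anc d i then 1 else 0) * x i = (if i = s then 1 else 0)"
      proof (cases "i = s")
        case True thus ?thesis using leaf_in[of d s] sI x01 by simp
      next
        case False
        have "\<not> (2^d+s-1 \<in> Anc d i \<and> i \<in> I)"
          using leaf_unique[of i d s] i s1 False by auto
        thus ?thesis using False x01 by auto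
      qed
    qed
    also have "\<dots> = 1" using s1 by (simp add: sum.delta)
    finally show ?thesis .
  qed
  define S where "S = Anc d s - {2^d+s-1}"
  define P where "P = (\<Prod>k\<in>S. nat (cnt k))"
  have finS: "finite S" unfolding S_def using finite_Anc by simp
  have P0: "0 < P" unfolding P_def using cnt_ge finS unfolding S_def
    by (intro prod_pos) fastforce
  have cardS: "card S \<le> d"
  proof -
    have "card S = card (Anc d s) - 1" unfolding S_def using leaf_in finite_Anc by simp
    thus ?thesis using card_Anc[of d s] by simp
  qed
  have "P \<le> (\<Prod>k\<in>S. 2^d)" unfolding P_def
    by (rule prod_mono) (use cnt_le in \<open>auto simp: nat_le_iff\<close>)
  also have "\<dots> = (2^d)^card S" by simp
  also have "\<dots> \<le> (2^d)^d" using cardS by (intro power_increasing) auto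
  also have "\<dots> = 2^(d*d)" by (simp add: power_mult)
  finally have Ple: "P \<le> 2^(d*d)" .
  define Bad where "Bad = {q. prime q \<and> d < q \<and> q dvd P}"
  have "Bad \<subseteq> {..P}" unfolding Bad_def using P0 by (auto intro: dvd_imp_le)
  hence finBad: "finite Bad" by (rule finite_subset) simp
  obtain q0 :: nat where q0: "prime q0" "P + d < q0" using bigger_prime by blast
  have exq: "prime q0 \<and> d < q0 \<and> \<not> q0 dvd P" using q0 P0 by (auto dest: dvd_imp_le)
  define p0 where "p0 = (LEAST q. prime q \<and> d < q \<and> \<not> q dvd P)"
  have p0: "prime p0 \<and> d < p0 \<and> \<not> p0 dvd P" unfolding p0_def using exq by (rule LeastI)
  have below: "q dvd P" if "q < p0" "prime q" "d < q" for q
    using not_less_Least[of q "\<lambda>q. prime q \<and> d < q \<and> \<not> q dvd P"] that unfolding p0_def by blast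
  have goodp0: "\<forall>k\<in>Anc d s. \<not> int p0 dvd cnt k"
  proof
    fix k assume k: "k \<in> Anc d s"
    show "\<not> int p0 dvd cnt k"
    proof (cases "k = 2^d+s-1")
      case True
      have "p0 \<noteq> 1" using p0 by auto
      thus ?thesis using True leaf by simp
    next
      case False
      hence kS: "k \<in> S" unfolding S_def using k by simp
      have "nat (cnt k) dvd P" unfolding P_def using finS kS by (rule dvd_prodI)
      moreover have "cnt k = int (nat (cnt k))" using cnt_ge[OF k] by simp
      ultimately show ?thesis using p0
        by (metis dvd_trans int_dvd_int_iff)
    qed
  qed
  have idx0: "idx d p0 c l = s" unfolding s_def I_def
    using good_prime_idx[of p0 d c l] p0 I goodp0 unfolding s_def I_def cnt_def x_def by blast
  have "card {q. prime q \<and> d < q \<and> q < p0} \<le> card Bad"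
    using finBad below unfolding Bad_def by (intro card_mono) auto
  moreover have "real (card Bad) \<le> real d * log (real d) (real (2^d))"
    unfolding Bad_def by (rule card_bad_bound[OF P0 Ple d2])
  ultimately have "real (card {q. prime q \<and> d < q \<and> q < p0}) \<le> real d * log (real d) (real (2^d))"
    by linarith
  hence "int (card {q. prime q \<and> d < q \<and> q < p0}) \<le> \<lfloor>real d * log (real d) (real (2^d))\<rfloor>"
    by (simp add: le_floor_iff)
  hence "card {q. prime q \<and> d < q \<and> q < p0} < nat (1 + \<lfloor>real d * log (real d) (real (2^d))\<rfloor>)"
    by linarith
  hence "p0 \<in> Primes_ms (2^d) d" unfolding Primes_ms_def Let_def using p0 by simp
  thus ?thesis using idx0 unfolding s_def I_def by blast
qed


lemma legendre:
  fixes p n M :: nat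
  assumes p: "prime p" and "n < p^(M+1)"
  shows "multiplicity p (fact n :: nat) = (\<Sum>i=1..M. n div p^i)"
  using assms(2)
proof (induction n)
  case 0 then show ?case by simp
next
  case (Suc n)
  have IH: "multiplicity p (fact n :: nat) = (\<Sum>i=1..M. n div p^i)" using Suc by simp
  have p1: "p > 1" using p prime_gt_1_nat by simp
  have nu: "\<not> is_unit p" using p1 by simp
  have pe: "prime_elem p" using p by simp
  define mu where "mu = multiplicity p (Suc n)"
  have "p^mu dvd Suc n" unfolding mu_def by (rule multiplicity_dvd)
  hence "p^mu \<le> Suc n" by (rule dvd_imp_le) simp
  hence "p^mu < p^(M+1)" using Suc.prems by simp
  hence "mu < M+1" by (rule power_less_imp_less_exp[OF p1])
  hence muM: "mu \<le> M" by simp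
  have dv: "p^i dvd Suc n \<longleftrightarrow> i \<le> mu" for i
    unfolding mu_def by (rule power_dvd_iff_le_multiplicity[OF _ nu]) simp
  have "multiplicity p (fact (Suc n) :: nat) = multiplicity p (Suc n * fact n :: nat)" by simp
  also have "\<dots> = mu + multiplicity p (fact n :: nat)"
    unfolding mu_def by (rule prime_elem_multiplicity_mult_distrib[OF pe]) auto
  finally have m1: "multiplicity p (fact (Suc n) :: nat) = mu + multiplicity p (fact n :: nat)" .
  have "(\<Sum>i=1..M. Suc n div p^i) = (\<Sum>i=1..M. n div p^i + (if i \<in> {..mu} then 1 else 0))"
  proof (rule sum.cong[OF refl])
    fix i
    have a: "Suc n div p^i = (if Suc n mod p^i = 0 then Suc (n div p^i) else n div p^i)" by (rule div_Suc)
    have b: "Suc n mod p^i = 0 \<longleftrightarrow> i \<le> mu" using dv[of i] by (simp only: dvd_eq_mod_eq_0)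
    show "Suc n div p^i = n div p^i + (if i \<in> {..mu} then 1 else 0)"
      using a b by simp
  qed
  also have "\<dots> = (\<Sum>i=1..M. n div p^i) + (\<Sum>i=1..M. if i \<in> {..mu} then 1 else 0)"
    by (rule sum.distrib)
  also have "(\<Sum>i=1..M. if i \<in> {..mu} then (1::nat) else 0) = sum (\<lambda>_. 1) ({1..M} \<inter> {..mu})"
    by (rule sum.inter_restrict[symmetric]) simp
  also have "{1..M} \<inter> {..mu} = {1..mu}" using muM by auto
  finally show ?case using m1 IH by simp
qed

lemma div_double:
  fixes n q :: nat
  assumes "0 < q"
  shows "2*(n div q) \<le> 2*n div q" "2*n div q \<le> 2*(n div q) + 1"
proof -
  define a where "a = n div q"
  have e: "q*a + n mod q = n" unfolding a_def by (rule mult_div_mod_eq)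
  have r: "n mod q < q" using assms by simp
  have h1: "q * a \<le> n" using e by linarith
  have h2: "n < q * a + q" using e r by linarith
  have "(2*a) * q \<le> 2*n" using h1 by (simp add: algebra_simps)
  thus "2*(n div q) \<le> 2*n div q" unfolding a_def[symmetric] using assms
    by (simp add: less_eq_div_iff_mult_less_eq)
  have "2*n < (2*a + 2) * q" using h2 by (simp add: algebra_simps)
  hence "2*n div q < 2*a + 2" by (rule less_mult_imp_div_less)
  thus "2*n div q \<le> 2*(n div q) + 1" unfolding a_def by simp
qed


lemma binom_prime_power_le:
  fixes p n :: nat
  assumes p: "prime p" and n: "1 \<le> n"
  shows "p ^ multiplicity p (2*n choose n) \<le> 2*n"
proof (rule ccontr)
  define e where "e = multiplicity p (2*n choose n)"
  define M where "M = 2*n"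
  assume "\<not> p ^ multiplicity p (2*n choose n) \<le> 2*n"
  hence big: "2*n < p^e" unfolding e_def by simp
  have p1: "p > 1" using p prime_gt_1_nat by simp
  have pe: "prime_elem p" using p by simp
  have "2*n < 2^(2*n)" by (rule less_exp)
  also have "\<dots> \<le> 2^(M+1)" unfolding M_def by (intro power_increasing) auto
  also have "\<dots> \<le> p^(M+1)" using p1 by (intro power_mono) auto
  finally have bM: "2*n < p^(M+1)" .
  hence bM': "n < p^(M+1)" by simp
  have C0: "(2*n choose n) \<noteq> 0" by simp
  have "fact n * fact (2*n - n) * (2*n choose n) = (fact (2*n) :: nat)" by (rule binomial_fact_lemma) simp
  hence ff: "fact (2*n) = fact n * (fact n * (2*n choose n) :: nat)" by (simp add: mult.assoc)
  have "multiplicity p (fact (2*n) :: nat) = multiplicity p (fact n :: nat) + multiplicity p (fact n * (2*n choose n) :: nat)"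
    unfolding ff by (rule prime_elem_multiplicity_mult_distrib[OF pe]) (use C0 in auto)
  also have "multiplicity p (fact n * (2*n choose n) :: nat) = multiplicity p (fact n :: nat) + e"
    unfolding e_def by (rule prime_elem_multiplicity_mult_distrib[OF pe]) (use C0 in auto)
  finally have mm: "multiplicity p (fact (2*n) :: nat) = 2 * multiplicity p (fact n :: nat) + e" by simp
  define t where "t = (\<lambda>i. 2*n div p^i - 2*(n div p^i))"
  have pp: "0 < p^i" for i using p1 by simp
  have td: "2*n div p^i = 2*(n div p^i) + t i" for i
    unfolding t_def using div_double(1)[OF pp[of i], of n] by simp
  have t1: "t i \<le> 1" for i unfolding t_def using div_double(2)[OF pp[of i], of n] by simp
  have t0: "t i = 0" if "e \<le> i" for i
  proof -
    have "p^e \<le> p^i" using that p1 by (intro power_increasing) auto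
    hence "2*n div p^i = 0" using big by simp
    thus ?thesis unfolding t_def by simp
  qed
  have "(\<Sum>i=1..M. 2*n div p^i) = (\<Sum>i=1..M. 2*(n div p^i)) + (\<Sum>i=1..M. t i)"
    unfolding td by (rule sum.distrib)
  also have "(\<Sum>i=1..M. 2*(n div p^i)) = 2 * (\<Sum>i=1..M. n div p^i)" by (simp add: sum_distrib_left)
  finally have "e = (\<Sum>i=1..M. t i)"
    using mm legendre[OF p bM] legendre[OF p bM'] by simp
  also have "\<dots> \<le> (\<Sum>i=1..M. if i \<in> {..<e} then 1 else 0)"
    by (rule sum_mono) (use t1 t0 in \<open>auto simp: not_less\<close>)
  also have "\<dots> = sum (\<lambda>_. 1) ({1..M} \<inter> {..<e})"
    by (rule sum.inter_restrict[symmetric]) simp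
  also have "\<dots> \<le> sum (\<lambda>_. 1) {1..<e}"
    by (rule sum_mono2) auto
  also have "\<dots> = e - 1" by simp
  finally have "e \<le> e - 1" .
  moreover have "e \<noteq> 0"
  proof
    assume "e = 0" thus False using big n by simp
  qed
  ultimately show False by simp
qed


lemma binom_le_pi:
  fixes n :: nat
  assumes n: "1 \<le> n"
  shows "(2*n choose n) \<le> (2*n) ^ card {p. prime p \<and> p \<le> 2*n}"
proof -
  define C where "C = (2*n choose n)"
  define PF where "PF = prime_factors C"
  have C0: "C > 0" unfolding C_def by simp
  have pf: "prime q" "q ^ multiplicity q C \<le> 2*n" if "q \<in> PF" for q
  proof -
    show pq: "prime q" using that unfolding PF_def by (simp add: in_prime_factors_iff)
    show "q ^ multiplicity q C \<le> 2*n" unfolding C_def by (rule binom_prime_power_le[OF pq n])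
  qed
  have sub: "PF \<subseteq> {p. prime p \<and> p \<le> 2*n}"
  proof
    fix q assume q: "q \<in> PF"
    have "q dvd C" using q unfolding PF_def by (simp add: in_prime_factors_iff)
    hence "q^1 dvd C" by simp
    moreover have "q \<noteq> 1" using pf(1)[OF q] by auto
    ultimately have "1 \<le> multiplicity q C"
      using power_dvd_iff_le_multiplicity[of C q 1] C0 by auto
    moreover have "1 \<le> q" using prime_gt_0_nat[OF pf(1)[OF q]] by simp
    ultimately have "q^1 \<le> q ^ multiplicity q C" by (intro power_increasing)
    thus "q \<in> {p. prime p \<and> p \<le> 2*n}" using pf[OF q] by simp
  qed
  have "C = (\<Prod>q\<in>PF. q ^ multiplicity q C)" unfolding PF_def by (rule prime_factorization_nat[OF C0])
  also have "\<dots> \<le> (\<Prod>q\<in>PF. 2*n)" by (rule prod_mono) (use pf in auto)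
  also have "\<dots> = (2*n) ^ card PF" by simp
  also have "\<dots> \<le> (2*n) ^ card {p. prime p \<and> p \<le> 2*n}"
    using n by (intro power_increasing card_mono sub) auto
  finally show ?thesis unfolding C_def .
qed

lemma chebyshev:
  fixes n :: nat
  assumes n: "1 \<le> n"
  shows "4^n \<le> (2*n+1) * (2*n) ^ card {p. prime p \<and> p \<le> 2*n}"
proof -
  have "(4::nat)^n = 2^(2*n)" by (simp add: power_mult)
  also have "\<dots> = (\<Sum>k\<le>2*n. 2*n choose k)" by (simp add: choose_row_sum)
  also have "\<dots> \<le> (\<Sum>k\<le>2*n. 2*n choose n)"
    by (rule sum_mono) (metis binomial_maximum nonzero_mult_div_cancel_left zero_neq_numeral)
  also have "\<dots> = (2*n+1) * (2*n choose n)" by simp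
  also have "\<dots> \<le> (2*n+1) * (2*n) ^ card {p. prime p \<and> p \<le> 2*n}"
    using binom_le_pi[OF n] by (rule mult_left_mono) simp
  finally show ?thesis .
qed


lemma N_val:
  assumes "2 \<le> d"
  shows "real d * log (real d) (real (2^d)) = real d ^ 2 / log 2 (real d)"
proof -
  have "log (real d) (real (2^d)) = log 2 (real (2^d)) / log 2 (real d)"
    by (rule log_base_change) auto
  also have "\<dots> = real d / log 2 (real d)" by simp
  finally show ?thesis by (simp add: power2_eq_square)
qed

lemma log2_bounds:
  assumes "2 \<le> d"
  shows "1 \<le> log 2 (real d)" "log 2 (real d) \<le> real d"
proof -
  show "1 \<le> log 2 (real d)" using assms by (subst one_le_log_cancel_iff) auto
  have "d < 2^d" by (rule less_exp)
  hence "real d < 2^d" by (metis of_nat_less_iff of_nat_numeral of_nat_power)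
  hence "log 2 (real d) < log 2 (2^d)" using assms by (subst log_less_cancel_iff) auto
  thus "log 2 (real d) \<le> real d" by simp
qed

lemma primes_ms_bound:
  fixes d p :: nat
  assumes d2: "2 \<le> d" and p: "p \<in> Primes_ms (2^d) d"
  shows "p \<le> 128 * d^2"
proof (rule ccontr)
  assume "\<not> p \<le> 128 * d^2"
  hence pX: "128 * d^2 < p" by simp
  define n where "n = 64 * d^2"
  define X where "X = 2 * n"
  define Pi where "Pi = card {q. prime q \<and> q \<le> X}"
  define D where "D = real d"
  define L where "L = log 2 D"
  have LD: "1 \<le> L" "L \<le> D" unfolding L_def D_def using log2_bounds[OF d2] by auto
  have D2: "2 \<le> D" unfolding D_def using d2 by simp
  have pm: "prime p" "d < p" "card {q. prime q \<and> d < q \<and> q < p} < nat (1 + \<lfloor>real d * log (real d) (real (2^d))\<rfloor>)"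
    using p unfolding Primes_ms_def Let_def by auto
  have Xp: "X < p" using pX unfolding X_def n_def by simp
  have "{q. prime q \<and> q \<le> X} \<subseteq> {q. prime q \<and> d < q \<and> q < p} \<union> {1..d}"
  proof
    fix q assume q: "q \<in> {q. prime q \<and> q \<le> X}"
    hence q1: "prime q" "q < p" "1 \<le> q" using Xp prime_gt_0_nat[of q] by auto
    show "q \<in> {q. prime q \<and> d < q \<and> q < p} \<union> {1..d}"
    proof (cases "q \<le> d")
      case True thus ?thesis using q1 by simp
    next
      case False thus ?thesis using q1 by simp
    qed
  qed
  hence "Pi \<le> card ({q. prime q \<and> d < q \<and> q < p} \<union> {1..d})" unfolding Pi_def
    by (intro card_mono) auto
  also have "\<dots> \<le> card {q. prime q \<and> d < q \<and> q < p} + card {1..d}" by (rule card_Un_le)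
  finally have "Pi \<le> card {q. prime q \<and> d < q \<and> q < p} + d" by simp
  hence "int Pi < 1 + \<lfloor>real d * log (real d) (real (2^d))\<rfloor> + d" using pm(3) by linarith
  hence "int Pi - d \<le> \<lfloor>real d * log (real d) (real (2^d))\<rfloor>" by linarith
  hence "real Pi - D \<le> real d * log (real d) (real (2^d))" unfolding D_def le_floor_iff by simp
  hence hP: "real Pi \<le> D + D^2 / L" unfolding N_val[OF d2] L_def D_def by simp
  have n1: "1 \<le> n" unfolding n_def using d2 by simp
  have ch: "4^n \<le> (X+1) * X ^ Pi" unfolding X_def Pi_def by (rule chebyshev[OF n1])
  have X0: "0 < X" unfolding X_def using n1 by simp
  have "real (4^n) \<le> real ((X+1) * X ^ Pi)" using ch by (simp only: of_nat_le_iff)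
  moreover have pos1: "0 < real (4^n)" by simp
  moreover have pos2: "0 < real ((X+1) * X ^ Pi)" using X0 by (simp only: of_nat_0_less_iff) simp
  ultimately have "log 2 (real (4^n)) \<le> log 2 (real ((X+1) * X ^ Pi))"
    by (subst log_le_cancel_iff) auto
  moreover have "log 2 (real (4^n)) = 2 * real n"
  proof -
    have "real (4^n) = 2 ^ (2*n)" by (simp add: power_mult)
    thus ?thesis by simp
  qed
  moreover have "log 2 (real ((X+1) * X ^ Pi)) = log 2 (real X + 1) + real Pi * log 2 (real X)"
  proof -
    have e1: "real ((X+1) * X ^ Pi) = (real X + 1) * real X ^ Pi" by (simp add: algebra_simps)
    have "log 2 ((real X + 1) * real X ^ Pi) = log 2 (real X + 1) + log 2 (real X ^ Pi)"
      by (rule log_mult_pos) (use X0 in auto)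
    also have "log 2 (real X ^ Pi) = real Pi * log 2 (real X)" by (rule log_nat_power) simp
    finally show ?thesis unfolding e1 .
  qed
  ultimately have main: "2 * real n \<le> log 2 (real X + 1) + real Pi * log 2 (real X)" by simp
  have rX: "real X = 2^7 * D^2" unfolding X_def n_def D_def by simp
  have l7: "log 2 (128::real) = 7"
  proof -
    have "log 2 ((2::real)^(7::nat)) = real (7::nat)" by (rule log_pow_cancel) auto
    thus ?thesis by simp
  qed
  have lX: "log 2 (real X) = 7 + 2 * L"
  proof -
    have "log 2 (real X) = log 2 (2^7) + log 2 (D^2)" unfolding rX using D2 by (simp add: log_mult)
    also have "\<dots> = 7 + 2 * L" unfolding L_def using D2 l7 by (simp add: log_nat_power)
    finally show ?thesis .
  qed
  have "log 2 (real X + 1) \<le> log 2 (2 * real X)" using X0 by (subst log_le_cancel_iff) auto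
  also have "\<dots> = 1 + log 2 (real X)" using X0 by (simp add: log_mult)
  finally have lX1: "log 2 (real X + 1) \<le> 8 + 2 * L" using lX by simp
  have Pmono: "real Pi * (7 + 2*L) \<le> (D + D^2/L) * (7 + 2*L)"
    using hP LD by (intro mult_right_mono) auto
  have expand: "(D + D^2/L) * (7 + 2*L) = 7*D + 2*(D*L) + 7*(D^2/L) + 2*D^2"
    using LD by (simp add: field_simps power2_eq_square)
  have a1: "D^2/L \<le> D^2" using LD by (simp add: divide_le_eq)  
  have a2: "D*L \<le> D^2" using LD D2 by (simp add: power2_eq_square mult_left_mono)
  have a3: "2*D \<le> D^2" using D2 by (simp add: power2_eq_square mult_right_mono)
  have "2 * real n = 128 * D^2" unfolding n_def D_def by simp
  moreover have "2 * real n \<le> log 2 (real X + 1) + real Pi * (7 + 2 * L)" using main unfolding lX .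
  ultimately have "128 * D^2 \<le> 8 + 2*L + real Pi * (7 + 2*L)" using lX1 by linarith
  thus False using Pmono expand a1 a2 a3 LD D2 by linarith
qed


lemma card_first_primes:
  fixes B N :: nat
  shows "card {p. prime p \<and> B < p \<and> card {q. prime q \<and> B < q \<and> q < p} < N} \<le> N"
proof -
  define f where "f = (\<lambda>p. card {q::nat. prime q \<and> B < q \<and> q < p})"
  define S where "S = {p. prime p \<and> B < p \<and> f p < N}"
  have mono: "f p < f p'" if "p \<in> S" "p < p'" for p p'
  proof -
    have "{q. prime q \<and> B < q \<and> q < p} \<subset> {q. prime q \<and> B < q \<and> q < p'}"
      using that unfolding S_def by auto
    moreover have "finite {q. prime q \<and> B < q \<and> q < p'}" by (rule finite_subset[of _ "{..<p'}"]) auto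
    ultimately show ?thesis unfolding f_def by (rule psubset_card_mono[rotated])
  qed
  have "inj_on f S"
  proof (rule inj_onI)
    fix p p' assume "p \<in> S" "p' \<in> S" "f p = f p'"
    thus "p = p'" using mono by (metis less_irrefl linorder_neqE_nat)
  qed
  moreover have "f ` S \<subseteq> {..<N}" unfolding S_def by auto
  ultimately have "card S \<le> card {..<N}" by (intro card_inj_on_le) auto
  thus ?thesis unfolding S_def f_def by simp
qed

lemma card_Primes_ms_bound:
  assumes "2 \<le> d"
  shows "real (card (Primes_ms (2^d) d)) \<le> 1 + real d ^ 2 / log 2 (real d)"
proof -
  define N where "N = nat (1 + \<lfloor>real d * log (real d) (real ((2::nat)^d))\<rfloor>)"
  have "card (Primes_ms (2^d) d) \<le> N"
    unfolding Primes_ms_def Let_def N_def using card_first_primes by simp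
  moreover have "0 \<le> real d * log (real d) (real ((2::nat)^d))"
    unfolding N_val[OF assms] using log2_bounds[OF assms] by simp
  hence "real N \<le> 1 + real d * log (real d) (real ((2::nat)^d))"
    unfolding N_def by linarith
  ultimately show ?thesis unfolding N_val[OF assms] by linarith
qed

lemma part1:
  fixes d :: nat and c :: "nat \<Rightarrow> nat" and l :: nat
  assumes d2: "2 \<le> d"
  shows "min0 {i \<in> {idx d p c l | p. p \<in> Primes_ms (2^d) d} \<inter> {1..2^d}. c i = l}
       = min0 {i \<in> {1..2^d}. c i = l}"
proof -
  define I where "I = {i \<in> {1..(2::nat)^d}. c i = l}"
  define A where "A = {i \<in> {idx d p c l | p. p \<in> Primes_ms (2^d) d} \<inter> {1..2^d}. c i = l}"
  have AI: "A \<subseteq> I" unfolding A_def I_def by auto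
  have finI: "finite I" unfolding I_def by simp
  show ?thesis
  proof (cases "I = {}")
    case True
    hence "A = {}" using AI by blast
    thus ?thesis using True unfolding min0_def A_def I_def by simp
  next
    case False
    obtain p where p: "p \<in> Primes_ms (2^d) d" "idx d p c l = Min I"
      using exists_good_prime[OF d2, of c l] False unfolding I_def by blast
    have "Min I \<in> I" using finI False by (rule Min_in)
    hence sA: "Min I \<in> A" unfolding A_def using p I_def by auto
    have "Min A = Min I"
    proof (rule Min_eqI)
      show "finite A" using finI AI by (rule finite_subset[rotated])
      show "Min I \<le> y" if "y \<in> A" for y using that AI finI by auto
    qed (rule sA)
    thus ?thesis using sA False unfolding min0_def A_def[symmetric] I_def[symmetric] by auto
  qed
qed

lemma ceil_log_props:
  fixes r :: nat
  assumes "2 \<le> r"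
  shows "1 \<le> nat \<lceil>log 2 (real r)\<rceil>" "r \<le> 2 ^ nat \<lceil>log 2 (real r)\<rceil>"
    "real (nat \<lceil>log 2 (real r)\<rceil>) \<le> 2 * log 2 (real r)"
proof -
  have l1: "1 \<le> log 2 (real r)" using assms by (subst one_le_log_cancel_iff) auto
  thus "1 \<le> nat \<lceil>log 2 (real r)\<rceil>" by linarith
  have "real r = 2 powr log 2 (real r)" using assms by simp
  also have "\<dots> \<le> 2 powr real (nat \<lceil>log 2 (real r)\<rceil>)" using l1 by (intro powr_mono) linarith+
  also have "\<dots> = 2 ^ nat \<lceil>log 2 (real r)\<rceil>" by (simp add: powr_realpow)
  finally have "real r \<le> real (2 ^ nat \<lceil>log 2 (real r)\<rceil>)" by simp
  thus "r \<le> 2 ^ nat \<lceil>log 2 (real r)\<rceil>" by (simp only: of_nat_le_iff)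
  show "real (nat \<lceil>log 2 (real r)\<rceil>) \<le> 2 * log 2 (real r)" using l1 by linarith
qed


theorem theorem4:
  fixes d r :: nat and c :: "nat \<Rightarrow> nat" and l :: nat
  assumes "d \<ge> 2" and "r \<ge> 2"
    and "\<forall>i\<in>{1..2^d}. c i < r" and "l < r"
  shows
    "min0 {i \<in> {idx d p c l | p. p \<in> Primes_ms (2^d) d} \<inter> {1..2^d}. c i = l}
       = min0 {i \<in> {1..2^d}. c i = l}
     \<and> (\<lambda>d'::nat. real (card (Primes_ms (2^d') d')))
         \<in> O(\<lambda>d'. (log 2 (real (2^d')))^2 / log 2 (log 2 (real (2^d'))))
     \<and> (\<exists>K::real. \<forall>d'\<ge>2. \<forall>p\<in>Primes_ms (2^d') d'. real p \<le> K * (log 2 (real (2^d')))^2)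
     \<and> (\<forall>p\<in>Primes_ms (2^d) d. \<forall>h\<in>{1..d}.
          \<exists>a. \<forall>c' l'. (\<forall>i\<in>{1..2^d}. c' i < r) \<and> l' < r \<longrightarrow>
             b_vec d p c' l' h
               = poly_eval a ((2^d + 1) * nat \<lceil>log 2 (real r)\<rceil>)
                   (2 * nat \<lceil>log 2 (real r)\<rceil> * (p - 1)^2)
                   (input_bits (2^d) (nat \<lceil>log 2 (real r)\<rceil>) c' l') mod int p)
     \<and> (\<exists>K::real. \<forall>d'\<ge>2. \<forall>r'\<ge>2. \<forall>p\<in>Primes_ms (2^d') d'.
          real (2 * nat \<lceil>log 2 (real r')\<rceil> * (p - 1)^2)
            \<le> K * (log 2 (real (2^d')))^4 * log 2 (real r'))"
proof (intro conjI)
  show "min0 {i \<in> {idx d p c l | p. p \<in> Primes_ms (2^d) d} \<inter> {1..2^d}. c i = l}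
       = min0 {i \<in> {1..2^d}. c i = l}" by (rule part1[OF assms(1)])
next
  show "(\<lambda>d'::nat. real (card (Primes_ms (2^d') d')))
         \<in> O(\<lambda>d'. (log 2 (real (2^d')))^2 / log 2 (log 2 (real (2^d'))))"
  proof (rule bigoI[where c = 2])
    show "\<forall>\<^sub>F d' in at_top. norm (real (card (Primes_ms (2^d') d')))
            \<le> 2 * norm ((log 2 (real (2^d')))^2 / log 2 (log 2 (real ((2::nat)^d'))))"
    proof (rule eventually_at_top_linorderI[of 2])
      fix d' :: nat assume d': "2 \<le> d'"
      have lb: "1 \<le> log 2 (real d')" "log 2 (real d') \<le> real d'" using log2_bounds[OF d'] by auto
      have "1 \<le> real d'" using d' by simp
      hence "real d' \<le> real d' ^ 2" by (simp add: power2_eq_square)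
      hence "log 2 (real d') \<le> real d' ^ 2" using lb by linarith
      hence "1 \<le> real d' ^ 2 / log 2 (real d')" using lb d' by (subst le_divide_eq_1_pos) auto
      hence "real (card (Primes_ms (2^d') d')) \<le> 2 * (real d' ^ 2 / log 2 (real d'))"
        using card_Primes_ms_bound[OF d'] by linarith
      moreover have "0 \<le> real d' ^ 2 / log 2 (real d')" using lb by simp
      moreover have "\<bar>log 2 (real d')\<bar> = log 2 (real d')" using lb by simp
      ultimately show "norm (real (card (Primes_ms (2^d') d')))
            \<le> 2 * norm ((log 2 (real (2^d')))^2 / log 2 (log 2 (real ((2::nat)^d'))))"
        by simp
    qed
  qed
next
  show "\<exists>K::real. \<forall>d'\<ge>2. \<forall>p\<in>Primes_ms (2^d') d'. real p \<le> K * (log 2 (real (2^d')))^2"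
  proof (intro exI[of _ 128] allI impI ballI)
    fix d' p :: nat assume "2 \<le> d'" "p \<in> Primes_ms (2^d') d'"
    hence "p \<le> 128 * d'^2" by (rule primes_ms_bound)
    hence "real p \<le> real (128 * d'^2)" by (simp only: of_nat_le_iff)
    thus "real p \<le> 128 * (log 2 (real (2^d')))^2" by simp
  qed
next
  show "\<forall>p\<in>Primes_ms (2^d) d. \<forall>h\<in>{1..d}.
          \<exists>a. \<forall>c' l'. (\<forall>i\<in>{1..2^d}. c' i < r) \<and> l' < r \<longrightarrow>
             b_vec d p c' l' h
               = poly_eval a ((2^d + 1) * nat \<lceil>log 2 (real r)\<rceil>)
                   (2 * nat \<lceil>log 2 (real r)\<rceil> * (p - 1)^2)
                   (input_bits (2^d) (nat \<lceil>log 2 (real r)\<rceil>) c' l') mod int p"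
    using part4[OF ceil_log_props(1,2)[OF assms(2)]] by blast
next
  show "\<exists>K::real. \<forall>d'\<ge>2. \<forall>r'\<ge>2. \<forall>p\<in>Primes_ms (2^d') d'.
          real (2 * nat \<lceil>log 2 (real r')\<rceil> * (p - 1)^2)
            \<le> K * (log 2 (real (2^d')))^4 * log 2 (real r')"
  proof (intro exI[of _ 65536] allI impI ballI)
    fix d' r' p :: nat assume d': "2 \<le> d'" and r': "2 \<le> r'" and p: "p \<in> Primes_ms (2^d') d'"
    define t where "t = nat \<lceil>log 2 (real r')\<rceil>"
    define D where "D = real d'"
    define L where "L = log 2 (real r')"
    have tL: "real t \<le> 2 * L" unfolding t_def L_def by (rule ceil_log_props(3)[OF r'])
    have L0: "0 \<le> L" unfolding L_def using r' by simp
    have "p \<le> 128 * d'^2" using d' p by (rule primes_ms_bound)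
    hence "real p \<le> 128 * D^2" unfolding D_def by (metis of_nat_le_iff of_nat_mult of_nat_numeral of_nat_power)
    moreover have "real (p - 1) \<le> real p" by simp
    ultimately have p1: "real (p - 1) \<le> 128 * D^2" by linarith
    have "real (p - 1) ^ 2 \<le> (128 * D^2)^2" using p1 by (intro power_mono) auto
    moreover have "(128 * D^2)^2 = 16384 * D^4" by (simp add: power_mult_distrib flip: power_mult)
    ultimately have p2: "real (p - 1) ^ 2 \<le> 16384 * D^4" by simp
    have "real (2 * t * (p - 1)^2) = 2 * real t * real (p - 1) ^ 2" by simp
    also have "\<dots> \<le> 2 * (2 * L) * (16384 * D^4)"
      using tL p2 L0 by (intro mult_mono) auto
    also have "\<dots> = 65536 * D^4 * L" by simp
    finally show "real (2 * nat \<lceil>log 2 (real r')\<rceil> * (p - 1)^2)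
            \<le> 65536 * (log 2 (real (2^d')))^4 * log 2 (real r')"
      unfolding t_def D_def L_def by simp
  qed
qed


end
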